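(* Let $p$ be a prime, $m\in\{1,\ldots,p-1\}$, $d\ge 0$ an integer, and $n=mp^d$. Then for every $i\in\mathbb{Z}_p$, \[ c_{p,i}(n)=\begin{cases} 2^{n-m}\,|\{\gamma\models m: r_\gamma\equiv i\pmod p\}| & \text{if } i=0 \text{ or } p=2 \text{ or } d=0,\\ 2^{n-m-1}\,|\{\gamma\models m: r_\gamma\equiv i \text{ or } r_\gamma\equiv -i\pmod p\}| & \text{otherwise.}\end{cases} \]
   Context: For a permutation $w$ of $[n]$, $D(w)=\{i\in[n-1]: w(i)>w(i+1)\}$. A composition $\alpha=(\alpha_1,\ldots,\alpha_\ell)$ of $n$ (written $\alpha\models n$) is a sequence of positive integers with sum $n$, with descent set $D(\alpha)=\{\alpha_1,\alpha_1+\alpha_2,\ldots,\alpha_1+\cdots+\alpha_{\ell-1}\}$. The ribbon number is $r_\alpha=|\{w\in\mathfrak{S}_n: D(w)=D(\alpha)\}|$, and for $i\in\mathbb{Z}_p$, $c_{p,i}(n)=|\{\alpha\models n: r_\alpha\equiv i\pmod p\}|$. *)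

theory Defs
  imports "HOL-Combinatorics.Combinatorics" "HOL-Number_Theory.Number_Theory"
begin

definition compositions :: "nat \<Rightarrow> nat list set" where
  "compositions n = {\<alpha>. (\<forall>a\<in>set \<alpha>. a > 0) \<and> sum_list \<alpha> = n}"

definition comp_descents :: "nat list \<Rightarrow> nat set" where
  "comp_descents \<alpha> = {sum_list (take j \<alpha>) | j. 1 \<le> j \<and> j < length \<alpha>}"

definition perm_descents :: "nat \<Rightarrow> (nat \<Rightarrow> nat) \<Rightarrow> nat set" where
  "perm_descents n w = {i \<in> {1..n-1}. w i > w (i+1)}"

definition ribbon :: "nat list \<Rightarrow> nat" where
  "ribbon \<alpha> = card {w. w permutes {1..sum_list \<alpha>} \<and>
                        perm_descents (sum_list \<alpha>) w = comp_descents \<alpha>}"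

definition c_count :: "nat \<Rightarrow> int \<Rightarrow> nat \<Rightarrow> nat" where
  "c_count p i n = card {\<alpha> \<in> compositions n. [int (ribbon \<alpha>) = i] (mod int p)}"

end

theory Submission
  imports Defs
begin

definition desc :: "nat list \<Rightarrow> nat set" where
  "desc xs = {i. 1 \<le> i \<and> i < length xs \<and> xs!i < xs!(i-1)}"
definition LA :: "nat set \<Rightarrow> nat list set" where
  "LA A = {xs. distinct xs \<and> set xs = A}"
definition Mle :: "nat set \<Rightarrow> nat set \<Rightarrow> nat" where
  "Mle A S = card {xs \<in> LA A. desc xs \<subseteq> S}"
definition rib :: "nat \<Rightarrow> nat set \<Rightarrow> nat" where
  "rib n D = card {xs \<in> LA {1..n}. desc xs = D}"

lemma finite_LA: "finite A \<Longrightarrow> finite (LA A)"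
proof -
  assume "finite A"
  have "LA A \<subseteq> {xs. set xs \<subseteq> A \<and> length xs \<le> card A}"
    by (auto simp: LA_def distinct_card)
  moreover have "finite {xs. set xs \<subseteq> A \<and> length xs \<le> card A}"
    using \<open>finite A\<close> by (rule finite_lists_length_le)
  ultimately show ?thesis by (rule finite_subset)
qed

lemma desc_map_upt: "desc (map w [1..<n+1]) = perm_descents n w"
  unfolding desc_def perm_descents_def
  by (auto simp del: upt_Suc simp: nth_map nth_upt)

lemma perm_to_list:
  "card {w. w permutes {1..n} \<and> perm_descents n w = D} = rib n D"
proof -
  let ?P = "{w. w permutes {1..n} \<and> perm_descents n w = D}"
  let ?L = "{xs \<in> LA {1..n}. desc xs = D}"
  have "bij_betw (\<lambda>w. map w [1..<n+1]) ?P ?L"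
  proof (rule bij_betwI')
    fix w v assume w: "w \<in> ?P" and v: "v \<in> ?P"
    show "(map w [1..<n+1] = map v [1..<n+1]) = (w = v)"
    proof
      assume eq: "map w [1..<n+1] = map v [1..<n+1]"
      show "w = v"
      proof
        fix x show "w x = v x"
        proof (cases "x \<in> {1..n}")
          case True
          then have "x \<in> set [1..<n+1]" by auto
          then show ?thesis using eq by (metis map_eq_conv)
        next
          case False
          then have "x \<notin> {1..n}" by simp
          then show ?thesis using w v permutes_not_in[of w "{1..n}" x] permutes_not_in[of v "{1..n}" x] by simp
        qed
      qed
    qed simp
  next
    fix w assume w: "w \<in> ?P"
    have "distinct (map w [1..<n+1])"
      using w permutes_inj_on[of w "{1..n}"] by (auto simp: distinct_map inj_on_subset)
    moreover have "set (map w [1..<n+1]) = {1..n}"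
      using w permutes_image[of w "{1..n}"] by (simp del: upt_Suc add: atLeastLessThanSuc_atLeastAtMost)
    ultimately show "map w [1..<n+1] \<in> ?L" using w desc_map_upt[of w n] by (simp del: upt_Suc add: LA_def)
  next
    fix xs assume xs: "xs \<in> ?L"
    then have d: "distinct xs" and s: "set xs = {1..n}" by (auto simp: LA_def)
    then have len: "length xs = n" using distinct_card by fastforce
    define w where "w = (\<lambda>i. if i \<in> {1..n} then xs!(i-1) else i)"
    have mp: "map w [1..<n+1] = xs"
      by (rule nth_equalityI) (auto simp del: upt_Suc simp: len w_def nth_map nth_upt)
    have img: "w ` {1..n} = {1..n}"
    proof -
      have "w ` {1..n} = (\<lambda>k. xs!k) ` {..<n}"
      proof (intro equalityI subsetI)
        fix y assume "y \<in> w ` {1..n}"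
        then obtain i where "i \<in> {1..n}" "y = xs!(i-1)" by (auto simp: w_def)
        then show "y \<in> (\<lambda>k. xs!k) ` {..<n}" by (intro image_eqI[of _ _ "i-1"]) auto
      next
        fix y assume "y \<in> (\<lambda>k. xs!k) ` {..<n}"
        then obtain k where "k < n" "y = xs!k" by auto
        then show "y \<in> w ` {1..n}" by (intro image_eqI[of _ _ "k+1"]) (auto simp: w_def)
      qed
      also have "\<dots> = set xs" using len by (auto simp: set_conv_nth)
      finally show ?thesis using s by simp
    qed
    have "inj_on w {1..n}"
    proof (rule inj_onI)
      fix a b assume a: "a \<in> {1..n}" and b: "b \<in> {1..n}" and e: "w a = w b"
      then have "xs!(a-1) = xs!(b-1)" by (simp add: w_def)
      then have "a - 1 = b - 1" using nth_eq_iff_index_eq[OF d, of "a-1" "b-1"] a b len by auto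
      then show "a = b" using a b by auto
    qed
    then have "bij_betw w {1..n} {1..n}" using img by (simp add: bij_betw_def)
    then have "w permutes {1..n}" by (rule bij_imp_permutes) (auto simp: w_def)
    moreover have "perm_descents n w = D" using xs mp desc_map_upt[of w n] by simp
    ultimately show "\<exists>w\<in>?P. xs = map w [1..<n+1]" using mp by auto
  qed
  then show ?thesis unfolding rib_def by (simp add: bij_betw_same_card)
qed

lemma ribbon_rib: "ribbon \<alpha> = rib (sum_list \<alpha>) (comp_descents \<alpha>)"
  unfolding ribbon_def by (rule perm_to_list)

lemma cd_cons: "comp_descents (a # \<beta>) = (if \<beta> = [] then {} else insert a ((+) a ` comp_descents \<beta>))"
proof (cases "\<beta> = []")
  case True then show ?thesis by (simp add: comp_descents_def)
next
  case False
  have "comp_descents (a # \<beta>) = insert a ((+) a ` comp_descents \<beta>)"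
  proof (intro equalityI subsetI)
    fix x assume "x \<in> comp_descents (a # \<beta>)"
    then obtain j where j: "1 \<le> j" "j < Suc (length \<beta>)" "x = sum_list (take j (a # \<beta>))"
      by (auto simp: comp_descents_def)
    show "x \<in> insert a ((+) a ` comp_descents \<beta>)"
    proof (cases "j = 1")
      case True then show ?thesis using j by simp
    next
      case False
      then obtain j' where "j = Suc j'" "1 \<le> j'" using j by (cases j) auto
      then show ?thesis using j by (auto simp: comp_descents_def)
    qed
  next
    fix x assume "x \<in> insert a ((+) a ` comp_descents \<beta>)"
    then show "x \<in> comp_descents (a # \<beta>)"
    proof
      assume "x = a" then show ?thesis using False
        by (auto simp: comp_descents_def intro!: exI[of _ 1])
    next
      assume "x \<in> (+) a ` comp_descents \<beta>"
      then obtain j where j: "1 \<le> j" "j < length \<beta>" "x = a + sum_list (take j \<beta>)"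
        by (auto simp: comp_descents_def)
      then show ?thesis by (auto simp: comp_descents_def intro!: exI[of _ "Suc j"])
    qed
  qed
  then show ?thesis using False by simp
qed

lemma comp_cons: "a # \<beta> \<in> compositions n \<longleftrightarrow> a > 0 \<and> a \<le> n \<and> \<beta> \<in> compositions (n - a)"
  by (auto simp: compositions_def)

lemma comp_nonempty: "\<beta> \<in> compositions n \<Longrightarrow> n \<ge> 1 \<Longrightarrow> \<beta> \<noteq> []"
  by (auto simp: compositions_def)

lemma comp_zero: "\<beta> \<in> compositions 0 \<Longrightarrow> \<beta> = []"
  by (cases \<beta>) (auto simp: compositions_def)

lemma cd_sub: "\<alpha> \<in> compositions n \<Longrightarrow> comp_descents \<alpha> \<subseteq> {1..<n}"
proof (induction \<alpha> arbitrary: n)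
  case Nil then show ?case by (simp add: comp_descents_def)
next
  case (Cons a \<beta>)
  then have a: "a > 0" "a \<le> n" and b: "\<beta> \<in> compositions (n - a)" by (auto simp: comp_cons)
  show ?case
  proof (cases "\<beta> = []")
    case True then show ?thesis by (simp add: cd_cons)
  next
    case False
    then have "n - a \<ge> 1" using b comp_zero by (cases "n - a") auto
    moreover have "comp_descents \<beta> \<subseteq> {1..<n - a}" using Cons.IH b by simp
    ultimately have "\<forall>x\<in>comp_descents \<beta>. 1 \<le> x \<and> x < n - a" by auto
    then have "\<forall>x\<in>comp_descents \<beta>. a + x < n" by auto
    then show ?thesis using a False \<open>n - a \<ge> 1\<close> by (auto simp: cd_cons)
  qed
qed

lemma cd_inj: "\<alpha> \<in> compositions n \<Longrightarrow> \<beta> \<in> compositions n \<Longrightarrow> comp_descents \<alpha> = comp_descents \<beta> \<Longrightarrow> \<alpha> = \<beta>"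
proof (induction \<alpha> arbitrary: n \<beta>)
  case Nil
  then have "n = 0" by (simp add: compositions_def)
  then show ?case using Nil comp_zero by metis
next
  case (Cons a \<alpha>')
  then have a: "a > 0" "a \<le> n" and a': "\<alpha>' \<in> compositions (n - a)" by (auto simp: comp_cons)
  from Cons.prems have "n \<ge> 1" using a by simp
  then obtain b \<beta>' where bb: "\<beta> = b # \<beta>'" using Cons.prems(2) comp_nonempty by (cases \<beta>) auto
  then have b: "b > 0" "b \<le> n" and b': "\<beta>' \<in> compositions (n - b)" using Cons.prems by (auto simp: comp_cons)
  show ?case
  proof (cases "\<alpha>' = []")
    case True
    then have "comp_descents \<beta>' = {} \<or> \<beta>' = []" using Cons.prems bb by (auto simp: cd_cons split: if_splits)
    then have "\<beta>' = []" using Cons.prems bb True by (auto simp: cd_cons split: if_splits)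
    then show ?thesis using True bb Cons.prems by (simp add: compositions_def)
  next
    case False
    have ne: "\<beta>' \<noteq> []" using Cons.prems bb False by (auto simp: cd_cons split: if_splits)
    have pa: "\<forall>x\<in>comp_descents \<alpha>'. x \<ge> 1" using cd_sub[OF a'] by auto
    have pb: "\<forall>x\<in>comp_descents \<beta>'. x \<ge> 1" using cd_sub[OF b'] by auto
    have eq: "insert a ((+) a ` comp_descents \<alpha>') = insert b ((+) b ` comp_descents \<beta>')"
      using Cons.prems bb False ne by (simp add: cd_cons)
    have "a = b"
    proof (rule ccontr)
      assume "a \<noteq> b"
      have "a \<in> insert b ((+) b ` comp_descents \<beta>')" "b \<in> insert a ((+) a ` comp_descents \<alpha>')"
        using eq by blast+
      then obtain x y where "x \<in> comp_descents \<beta>'" "a = b + x" "y \<in> comp_descents \<alpha>'" "b = a + y"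
        using \<open>a \<noteq> b\<close> by auto
      then show False using pa pb by force
    qed
    then have "(+) a ` comp_descents \<alpha>' = (+) a ` comp_descents \<beta>'"
    proof -
      have "a \<notin> (+) a ` comp_descents \<alpha>'" "a \<notin> (+) a ` comp_descents \<beta>'" using pa pb by auto
      then show ?thesis using eq \<open>a = b\<close> insert_ident by metis
    qed
    then have "comp_descents \<alpha>' = comp_descents \<beta>'" by (simp add: inj_image_eq_iff)
    then have "\<alpha>' = \<beta>'" using Cons.IH[OF a'] b' \<open>a = b\<close> by simp
    then show ?thesis using bb \<open>a = b\<close> by simp
  qed
qed

lemma cd_surj: "n \<ge> 1 \<Longrightarrow> D \<subseteq> {1..<n} \<Longrightarrow> \<exists>\<alpha>\<in>compositions n. comp_descents \<alpha> = D"
proof (induction n arbitrary: D rule: less_induct)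
  case (less n)
  show ?case
  proof (cases "D = {}")
    case True
    then show ?thesis using less.prems by (intro bexI[of _ "[n]"]) (auto simp: cd_cons compositions_def)
  next
    case False
    have fin: "finite D" using less.prems finite_subset by blast
    define a where "a = Min D"
    have aD: "a \<in> D" using fin False by (simp add: a_def)
    have a1: "a \<ge> 1" "a < n" using aD less.prems by auto
    define D' where "D' = (\<lambda>x. x - a) ` (D - {a})"
    have D'sub: "D' \<subseteq> {1..<n - a}"
    proof
      fix y assume "y \<in> D'"
      then obtain x where x: "x \<in> D" "x \<noteq> a" "y = x - a" by (auto simp: D'_def)
      have "a \<le> x" using x fin by (simp add: a_def)
      then show "y \<in> {1..<n - a}" using x less.prems by auto
    qed
    obtain \<beta> where \<beta>: "\<beta> \<in> compositions (n - a)" "comp_descents \<beta> = D'"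
    proof -
      have "n - a < n" "1 \<le> n - a" using a1 by simp_all
      then show ?thesis using less.IH[of "n - a" D'] D'sub that by blast
    qed
    have ne: "\<beta> \<noteq> []" using \<beta> comp_nonempty a1 by simp
    have "(+) a ` D' = D - {a}"
    proof -
      have "\<forall>x\<in>D. a \<le> x" using fin by (simp add: a_def)
      then show ?thesis unfolding D'_def image_image by (auto simp: image_iff intro!: bexI)
    qed
    then have "comp_descents (a # \<beta>) = D" using ne \<beta> aD by (auto simp: cd_cons)
    moreover have "a # \<beta> \<in> compositions n" using \<beta> a1 by (simp add: comp_cons)
    ultimately show ?thesis by blast
  qed
qed

lemma count_comp:
  assumes "n \<ge> 1"
  shows "card {\<alpha> \<in> compositions n. P (comp_descents \<alpha>)} = card {D \<in> Pow {1..<n}. P D}"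
proof -
  have "inj_on comp_descents {\<alpha> \<in> compositions n. P (comp_descents \<alpha>)}"
    by (rule inj_onI) (auto intro: cd_inj)
  moreover have "comp_descents ` {\<alpha> \<in> compositions n. P (comp_descents \<alpha>)} = {D \<in> Pow {1..<n}. P D}"
  proof (intro equalityI subsetI)
    fix D assume "D \<in> comp_descents ` {\<alpha> \<in> compositions n. P (comp_descents \<alpha>)}"
    then show "D \<in> {D \<in> Pow {1..<n}. P D}" using cd_sub by auto
  next
    fix D assume "D \<in> {D \<in> Pow {1..<n}. P D}"
    then obtain \<alpha> where "\<alpha> \<in> compositions n" "comp_descents \<alpha> = D" using cd_surj[OF assms] by auto
    then show "D \<in> comp_descents ` {\<alpha> \<in> compositions n. P (comp_descents \<alpha>)}"
      using \<open>D \<in> {D \<in> Pow {1..<n}. P D}\<close> by auto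
  qed
  ultimately show ?thesis by (metis card_image)
qed

lemma alt_sum: "finite E \<Longrightarrow> (\<Sum>R\<in>Pow E. (-1::int) ^ card (E - R)) = (if E = {} then 1 else 0)"
proof (induction E rule: finite_induct)
  case empty then show ?case by simp
next
  case (insert e F)
  have disj: "Pow F \<inter> insert e ` Pow F = {}" using insert by auto
  have inj: "inj_on (insert e) (Pow F)" using insert by (auto simp: inj_on_def)
  have s1: "(\<Sum>R\<in>Pow F. (-1::int) ^ card (insert e F - R)) = - (\<Sum>R\<in>Pow F. (-1::int) ^ card (F - R))"
  proof -
    have "card (insert e F - R) = Suc (card (F - R))" if "R \<in> Pow F" for R
    proof -
      have "insert e F - R = insert e (F - R)" using that insert.hyps(2) by blast
      moreover have "e \<notin> F - R" using insert.hyps(2) by blast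
      ultimately show ?thesis using insert.hyps(1) by simp
    qed
    then have "(\<Sum>R\<in>Pow F. (-1::int) ^ card (insert e F - R)) = (\<Sum>R\<in>Pow F. - ((-1::int) ^ card (F - R)))"
      by (intro sum.cong refl) simp
    then show ?thesis by (simp add: sum_negf)
  qed
  have s2: "(\<Sum>R\<in>insert e ` Pow F. (-1::int) ^ card (insert e F - R)) = (\<Sum>R\<in>Pow F. (-1::int) ^ card (F - R))"
  proof -
    have "(\<Sum>R\<in>insert e ` Pow F. (-1::int) ^ card (insert e F - R)) = (\<Sum>R\<in>Pow F. (-1::int) ^ card (insert e F - insert e R))"
      using inj by (simp add: sum.reindex)
    also have "\<dots> = (\<Sum>R\<in>Pow F. (-1::int) ^ card (F - R))"
    proof (intro sum.cong refl)
      fix R assume "R \<in> Pow F"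
      have "insert e F - insert e R = F - R" using insert.hyps(2) by blast
      then show "(-1::int) ^ card (insert e F - insert e R) = (-1) ^ card (F - R)" by simp
    qed
    finally show ?thesis .
  qed
  have "(\<Sum>R\<in>Pow (insert e F). (-1::int) ^ card (insert e F - R)) =
    (\<Sum>R\<in>Pow F. (-1::int) ^ card (insert e F - R)) + (\<Sum>R\<in>insert e ` Pow F. (-1::int) ^ card (insert e F - R))"
    unfolding Pow_insert using insert disj by (simp add: sum.union_disjoint)
  then show ?case using s1 s2 by simp
qed

lemma card_filter_sum: "finite X \<Longrightarrow> int (card {x\<in>X. P x}) = (\<Sum>x\<in>X. if P x then 1 else 0)"
  by (simp add: sum.If_cases Int_def)

lemma mobius:
  assumes "finite X" "finite D"
  shows "int (card {x\<in>X. f x = D}) = (\<Sum>S\<in>Pow D. (-1)^card (D - S) * int (card {x\<in>X. f x \<subseteq> S}))"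
proof -
  have inner: "(\<Sum>S\<in>Pow D. (-1::int)^card (D - S) * (if f x \<subseteq> S then 1 else 0)) = (if f x = D then 1 else 0)" for x
  proof (cases "f x \<subseteq> D")
    case False
    then have "\<And>S. S \<in> Pow D \<Longrightarrow> \<not> f x \<subseteq> S" by auto
    then show ?thesis using False by auto
  next
    case True
    have "(\<Sum>S\<in>Pow D. (-1::int)^card (D - S) * (if f x \<subseteq> S then 1 else 0)) =
          (\<Sum>S\<in>{S\<in>Pow D. f x \<subseteq> S}. (-1::int)^card (D - S))"
      using assms by (simp add: sum.inter_filter[symmetric] if_distrib cong: if_cong)
    also have "{S\<in>Pow D. f x \<subseteq> S} = (\<lambda>R. f x \<union> R) ` Pow (D - f x)" using True by auto
    also have "(\<Sum>S\<in>(\<lambda>R. f x \<union> R) ` Pow (D - f x). (-1::int)^card (D - S)) =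
               (\<Sum>R\<in>Pow (D - f x). (-1::int)^card ((D - f x) - R))"
    proof (subst sum.reindex)
      show "inj_on (\<lambda>R. f x \<union> R) (Pow (D - f x))" by (auto simp: inj_on_def)
      show "sum ((\<lambda>S. (- 1::int) ^ card (D - S)) \<circ> (\<union>) (f x)) (Pow (D - f x)) =
            (\<Sum>R\<in>Pow (D - f x). (- 1) ^ card (D - f x - R))"
      proof (intro sum.cong refl)
        fix R assume "R \<in> Pow (D - f x)"
        have "D - (f x \<union> R) = D - f x - R" by blast
        then show "((\<lambda>S. (- 1::int) ^ card (D - S)) \<circ> (\<union>) (f x)) R = (- 1) ^ card (D - f x - R)" by simp
      qed
    qed
    also have "\<dots> = (if D - f x = {} then 1 else 0)" using assms by (simp add: alt_sum)
    finally show ?thesis using True by auto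
  qed
  have "(\<Sum>S\<in>Pow D. (-1)^card (D - S) * int (card {x\<in>X. f x \<subseteq> S})) =
        (\<Sum>S\<in>Pow D. \<Sum>x\<in>X. (-1::int)^card (D - S) * (if f x \<subseteq> S then 1 else 0))"
    using assms by (simp add: sum_distrib_left card_filter_sum)
  also have "\<dots> = (\<Sum>x\<in>X. \<Sum>S\<in>Pow D. (-1::int)^card (D - S) * (if f x \<subseteq> S then 1 else 0))"
    by (rule sum.swap)
  also have "\<dots> = (\<Sum>x\<in>X. (if f x = D then 1 else 0))" by (simp only: inner)
  also have "\<dots> = int (card {x\<in>X. f x = D})" using assms by (simp add: card_filter_sum)
  finally show ?thesis by simp
qed

lemma desc_sub: "desc xs \<subseteq> {1..<length xs}"
  by (auto simp: desc_def)

lemma desc_app_left: "i < length ys \<Longrightarrow> (i \<in> desc (ys @ zs)) = (i \<in> desc ys)"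
  by (auto simp: desc_def nth_append)

lemma desc_app_right: "i > length ys \<Longrightarrow> (i \<in> desc (ys @ zs)) = (i - length ys \<in> desc zs)"
proof -
  assume i: "i > length ys"
  then have "i - 1 \<ge> length ys" by simp
  moreover have "i - length ys - 1 = i - 1 - length ys" by simp
  ultimately show ?thesis using i by (auto simp: desc_def nth_append)
qed

lemma sorted_desc: "sorted xs \<Longrightarrow> desc xs = {}"
proof -
  assume "sorted xs"
  then have "xs!(i-1) \<le> xs!i" if "1 \<le> i" "i < length xs" for i
    using that by (simp add: sorted_nth_mono)
  then show ?thesis by (fastforce simp: desc_def)
qed

lemma desc_sorted: "desc xs = {} \<Longrightarrow> sorted xs"
proof -
  assume "desc xs = {}"
  then have nd: "\<not> (Suc i \<in> desc xs)" for i by simp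
  have "xs!i \<le> xs!(Suc i)" if "Suc i < length xs" for i
    using that nd[of i] by (auto simp: desc_def not_less)
  then show ?thesis by (simp add: sorted_iff_nth_Suc)
qed

lemma Mle_empty: "finite A \<Longrightarrow> Mle A {} = 1"
proof -
  assume fin: "finite A"
  have "{xs \<in> LA A. desc xs \<subseteq> {}} = {sorted_list_of_set A}"
  proof (intro equalityI subsetI)
    fix xs assume "xs \<in> {xs \<in> LA A. desc xs \<subseteq> {}}"
    then have "distinct xs" "set xs = A" "sorted xs" using desc_sorted by (auto simp: LA_def)
    then show "xs \<in> {sorted_list_of_set A}"
      using sorted_distinct_set_unique[of xs "sorted_list_of_set A"] fin by simp
  next
    fix xs assume "xs \<in> {sorted_list_of_set A}"
    then show "xs \<in> {xs \<in> LA A. desc xs \<subseteq> {}}" using fin sorted_desc by (simp add: LA_def)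
  qed
  then show ?thesis by (simp add: Mle_def)
qed

lemma LA_length: "xs \<in> LA A \<Longrightarrow> length xs = card A"
  by (auto simp: LA_def distinct_card)

lemma split_sum:
  assumes fin: "finite A" and S: "S \<subseteq> {1..<card A}" "S \<noteq> {}"
  shows "Mle A S = (\<Sum>B\<in>{B. B \<subseteq> A \<and> card B = card A - Max S}. Mle (A - B) (S - {Max S}))"
proof -
  define s where "s = Max S"
  have finS: "finite S" using S finite_subset by blast
  have sS: "s \<in> S" using finS S by (simp add: s_def)
  have s1: "1 \<le> s" "s < card A" using sS S by auto
  have sMax: "\<And>x. x \<in> S \<Longrightarrow> x \<le> s" using finS by (simp add: s_def)
  define \<Phi> where "\<Phi> = (\<lambda>(B::nat set, ys::nat list). ys @ sorted_list_of_set B)"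
  define Dom where "Dom = (SIGMA B:{B. B \<subseteq> A \<and> card B = card A - s}. {ys \<in> LA (A - B). desc ys \<subseteq> S - {s}})"
  have lenys: "length ys = s" if "B \<subseteq> A" "card B = card A - s" "ys \<in> LA (A - B)" for B ys
  proof -
    have "length ys = card (A - B)" using that LA_length by blast
    also have "\<dots> = card A - card B" using that fin by (simp add: card_Diff_subset finite_subset)
    finally show ?thesis using that s1 by simp
  qed
  have inj: "inj_on \<Phi> Dom"
  proof (rule inj_onI)
    fix x y assume x: "x \<in> Dom" and y: "y \<in> Dom" and e: "\<Phi> x = \<Phi> y"
    obtain B ys where xx: "x = (B, ys)" by fastforce
    obtain B' ys' where yy: "y = (B', ys')" by fastforce
    have l: "length ys = s" "length ys' = s" using x y xx yy lenys by (auto simp: Dom_def)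
    have "ys = ys'" "sorted_list_of_set B = sorted_list_of_set B'"
      using e l by (auto simp: \<Phi>_def xx yy append_eq_append_conv)
    moreover have "B \<subseteq> A" "B' \<subseteq> A" using x y xx yy by (auto simp: Dom_def)
    then have "finite B" "finite B'" using finite_subset[OF _ fin] by blast+
    ultimately have "B = B'" by (metis set_sorted_list_of_set)
    then show "x = y" using xx yy \<open>ys = ys'\<close> by simp
  qed
  have img: "\<Phi> ` Dom = {xs \<in> LA A. desc xs \<subseteq> S}"
  proof (intro equalityI subsetI)
    fix xs assume "xs \<in> \<Phi> ` Dom"
    then obtain B ys where B: "B \<subseteq> A" "card B = card A - s" and ys: "ys \<in> LA (A - B)" "desc ys \<subseteq> S - {s}"
      and xs: "xs = ys @ sorted_list_of_set B" by (auto simp: Dom_def \<Phi>_def)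
    have finB: "finite B" using finite_subset[OF B(1) fin] .
    have ly: "length ys = s" using lenys B ys by blast
    have "distinct xs" using ys finB by (auto simp: xs LA_def)
    moreover have "set xs = A" using ys finB B by (auto simp: xs LA_def)
    moreover have "desc xs \<subseteq> S"
    proof
      fix i assume i: "i \<in> desc xs"
      consider "i < s" | "i = s" | "i > s" by linarith
      then show "i \<in> S"
      proof cases
        case 1 then show ?thesis using i ys ly desc_app_left[of i ys] xs by auto
      next
        case 2 then show ?thesis using sS by simp
      next
        case 3
        then have "i - s \<in> desc (sorted_list_of_set B)" using i ly desc_app_right[of ys i] xs by auto
        then show ?thesis using sorted_desc[of "sorted_list_of_set B"] by simp
      qed
    qed
    ultimately show "xs \<in> {xs \<in> LA A. desc xs \<subseteq> S}" by (simp add: LA_def)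
  next
    fix xs assume xs: "xs \<in> {xs \<in> LA A. desc xs \<subseteq> S}"
    then have d: "distinct xs" and sx: "set xs = A" and ds: "desc xs \<subseteq> S" by (auto simp: LA_def)
    have lx: "length xs = card A" using xs LA_length by blast
    define ys where "ys = take s xs"
    define zs where "zs = drop s xs"
    define B where "B = set zs"
    have xsplit: "xs = ys @ zs" by (simp add: ys_def zs_def)
    have ly: "length ys = s" using lx s1 by (simp add: ys_def)
    have dz: "desc zs = {}"
    proof (rule ccontr)
      assume "desc zs \<noteq> {}"
      then obtain j where j: "j \<in> desc zs" by blast
      then have "j \<ge> 1" by (auto simp: desc_def)
      then have "s + j \<in> desc xs" using j desc_app_right[of ys "s + j" zs] xsplit ly by simp
      then have "s + j \<le> s" using ds sMax by blast
      then show False using \<open>j \<ge> 1\<close> by simp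
    qed
    have dd: "distinct (ys @ zs)" using d xsplit by simp
    have dzz: "distinct zs" "distinct ys" "set ys \<inter> set zs = {}" using dd[unfolded distinct_append] by auto
    have finB: "finite B" by (simp add: B_def)
    have zsort: "zs = sorted_list_of_set B"
    proof (rule sorted_distinct_set_unique)
      show "sorted zs" by (rule desc_sorted[OF dz])
      show "distinct zs" by (rule dzz(1))
      show "sorted (sorted_list_of_set B)" by (rule sorted_sorted_list_of_set)
      show "distinct (sorted_list_of_set B)" by (rule distinct_sorted_list_of_set)
      show "set zs = set (sorted_list_of_set B)" using finB by (simp only: set_sorted_list_of_set B_def)
    qed
    have BA: "B \<subseteq> A" using sx xsplit by (auto simp: B_def)
    have cB: "card B = card A - s" using dzz lx by (simp add: B_def zs_def distinct_card)
    have ysLA: "ys \<in> LA (A - B)" using dzz sx xsplit by (auto simp: LA_def B_def)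
    have dys: "desc ys \<subseteq> S - {s}"
    proof
      fix i assume i: "i \<in> desc ys"
      then have "i < s" using desc_sub ly by fastforce
      then have "i \<in> desc xs" using i desc_app_left[of i ys zs] xsplit ly by simp
      then show "i \<in> S - {s}" using ds \<open>i < s\<close> by auto
    qed
    have "(B, ys) \<in> Dom" using BA cB ysLA dys by (simp add: Dom_def)
    moreover have "xs = \<Phi> (B, ys)" using xsplit zsort by (simp add: \<Phi>_def)
    ultimately show "xs \<in> \<Phi> ` Dom" by blast
  qed
  have f1: "finite {B. B \<subseteq> A \<and> card B = card A - s}"
  proof (rule finite_subset)
    show "{B. B \<subseteq> A \<and> card B = card A - s} \<subseteq> Pow A" by blast
    show "finite (Pow A)" using fin by simp
  qed
  have f2: "finite {ys \<in> LA (A - B). desc ys \<subseteq> S - {s}}" for B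
  proof (rule finite_subset)
    show "{ys \<in> LA (A - B). desc ys \<subseteq> S - {s}} \<subseteq> LA (A - B)" by blast
    show "finite (LA (A - B))" using fin by (simp add: finite_LA)
  qed
  have "Mle A S = card Dom" unfolding Mle_def using card_image[OF inj] img by simp
  also have "\<dots> = (\<Sum>B\<in>{B. B \<subseteq> A \<and> card B = card A - s}. Mle (A - B) (S - {s}))"
    unfolding Dom_def Mle_def
    using f2 by (intro card_SigmaI[OF f1]) auto
  finally show ?thesis by (simp add: s_def)
qed

lemma Mle_rec_gen:
  assumes fin: "finite A" and S: "S \<subseteq> {1..<card A}" "S \<noteq> {}"
    and H: "\<And>B. finite B \<Longrightarrow> card B = Max S \<Longrightarrow> Mle B (S - {Max S}) = Mle {1..Max S} (S - {Max S})"
  shows "Mle A S = (card A choose (card A - Max S)) * Mle {1..Max S} (S - {Max S})"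
proof -
  have finS: "finite S" using S finite_subset by blast
  have sS: "Max S \<in> S" using finS S by simp
  then have s1: "Max S < card A" using S by auto
  have "Mle A S = (\<Sum>B\<in>{B. B \<subseteq> A \<and> card B = card A - Max S}. Mle (A - B) (S - {Max S}))"
    by (rule split_sum[OF fin S])
  also have "\<dots> = (\<Sum>B\<in>{B. B \<subseteq> A \<and> card B = card A - Max S}. Mle {1..Max S} (S - {Max S}))"
  proof (rule sum.cong[OF refl])
    fix B assume B: "B \<in> {B. B \<subseteq> A \<and> card B = card A - Max S}"
    then have "finite (A - B)" using fin by simp
    moreover have "card (A - B) = Max S"
    proof -
      have "B \<subseteq> A" using B by simp
      then have "card (A - B) = card A - card B" using fin by (simp add: card_Diff_subset finite_subset[OF _ fin])
      then show ?thesis using B s1 by simp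
    qed
    ultimately show "Mle (A - B) (S - {Max S}) = Mle {1..Max S} (S - {Max S})" by (rule H)
  qed
  also have "\<dots> = (card A choose (card A - Max S)) * Mle {1..Max S} (S - {Max S})"
    using n_subsets[OF fin, of "card A - Max S"] by simp
  finally show ?thesis .
qed

lemma Mle_card_aux:
  "\<forall>A A'. finite A \<longrightarrow> finite A' \<longrightarrow> card A = card A' \<longrightarrow> S \<subseteq> {1..<card A} \<longrightarrow> Mle A S = Mle A' S"
proof (induction "card S" arbitrary: S rule: less_induct)
  case less
  show ?case
  proof (intro allI impI)
    fix A A' :: "nat set"
    assume fA: "finite A" and fA': "finite A'" and c: "card A = card A'" and S: "S \<subseteq> {1..<card A}"
    show "Mle A S = Mle A' S"
    proof (cases "S = {}")
      case True then show ?thesis using fA fA' by (simp add: Mle_empty)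
    next
      case False
      have finS: "finite S" using S finite_subset by blast
      have sS: "Max S \<in> S" using finS False by simp
      have lt: "card (S - {Max S}) < card S" using finS sS by (meson card_Diff1_less)
      have sub: "S - {Max S} \<subseteq> {1..<Max S}"
      proof
        fix x assume x: "x \<in> S - {Max S}"
        then have "x \<le> Max S" using finS by simp
        then show "x \<in> {1..<Max S}" using x S by auto
      qed
      have H: "\<And>B. finite B \<Longrightarrow> card B = Max S \<Longrightarrow> Mle B (S - {Max S}) = Mle {1..Max S} (S - {Max S})"
      proof -
        fix B :: "nat set" assume "finite B" "card B = Max S"
        moreover have "card {1..Max S} = Max S" by simp
        ultimately show "Mle B (S - {Max S}) = Mle {1..Max S} (S - {Max S})"
          using less[OF lt, rule_format, of B "{1..Max S}"] sub by simp
      qed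
      have S': "S \<subseteq> {1..<card A'}" using S c by simp
      show ?thesis using Mle_rec_gen[OF fA S False H] Mle_rec_gen[OF fA' S' False H] c by simp
    qed
  qed
qed

lemma Mle_rec:
  assumes S: "S \<subseteq> {1..<n}" "S \<noteq> {}"
  shows "Mle {1..n} S = (n choose Max S) * Mle {1..Max S} (S - {Max S})"
proof -
  have finS: "finite S" using S finite_subset by blast
  have sS: "Max S \<in> S" using finS S by simp
  have sub: "S - {Max S} \<subseteq> {1..<Max S}"
  proof
    fix x assume x: "x \<in> S - {Max S}"
    then have "x \<le> Max S" using finS by simp
    then show "x \<in> {1..<Max S}" using x S by auto
  qed
  have H: "\<And>B. finite B \<Longrightarrow> card B = Max S \<Longrightarrow> Mle B (S - {Max S}) = Mle {1..Max S} (S - {Max S})"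
  proof -
    fix B :: "nat set" assume "finite B" "card B = Max S"
    moreover have "card {1..Max S} = Max S" by simp
    ultimately show "Mle B (S - {Max S}) = Mle {1..Max S} (S - {Max S})"
      using Mle_card_aux[of "S - {Max S}", rule_format, of B "{1..Max S}"] sub by simp
  qed
  have S2: "S \<subseteq> {1..<card {1..n}}" using S by simp
  have "Mle {1..n} S = (card {1..n} choose (card {1..n} - Max S)) * Mle {1..Max S} (S - {Max S})"
    by (rule Mle_rec_gen[OF finite_atLeastAtMost S2 S(2) H])
  then have "Mle {1..n} S = (n choose (n - Max S)) * Mle {1..Max S} (S - {Max S})" by simp
  also have "n choose (n - Max S) = n choose Max S"
    using sS S by (intro binomial_symmetric[symmetric]) auto
  finally show ?thesis .
qed

lemma Mle_empty_n: "Mle {1..n} {} = 1"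
  by (simp add: Mle_empty)

lemma binom_pa_zero:
  fixes p a k :: nat
  assumes p: "prime p" and k: "\<not> p dvd k"
  shows "p dvd ((p * a) choose k)"
proof -
  obtain k' where kk: "k = Suc k'" using k by (cases k) auto
  have "Suc k' * ((p * a) choose Suc k') = (p * a) * ((p * a - 1) choose k')"
    by (rule binomial_absorption)
  then have "p dvd Suc k' * ((p * a) choose Suc k')" by simp
  then show ?thesis using p k kk prime_dvd_mult_iff by blast
qed

lemma binom_shift:
  fixes p n r :: nat
  assumes p: "prime p"
  shows "[(n + p) choose r = (n choose r) + (if p \<le> r then n choose (r - p) else 0)] (mod p)"
proof -
  have p0: "p \<noteq> 0" using p by auto
  have "(n + p) choose r = (\<Sum>k\<le>r. (p choose k) * (n choose (r - k)))"
    using vandermonde[of p n r] by (simp add: add.commute)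
  also have "[\<dots> = (\<Sum>k\<le>r. (if k = 0 then n choose r else 0) + (if k = p then n choose (r - p) else 0))] (mod p)"
  proof (rule cong_sum)
    fix k assume "k \<in> {..r}"
    show "[(p choose k) * (n choose (r - k)) = (if k = 0 then n choose r else 0) + (if k = p then n choose (r - p) else 0)] (mod p)"
    proof (cases "k = 0 \<or> k = p")
      case True then show ?thesis using p0 by auto
    next
      case False
      show ?thesis
      proof (cases "k < p")
        case True
        then have "\<not> p dvd k" using False by (auto dest: dvd_imp_le)
        then have "p dvd (p choose k)" using binom_pa_zero[OF p, of k 1] by simp
        then show ?thesis using False by (simp add: cong_0_iff)
      next
        case False2: False
        then have "p choose k = 0" using False by simp
        then show ?thesis using False by (simp only: mult_0 if_False add_0) simp
      qed
    qed
  qed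
  also have "(\<Sum>k\<le>r. (if k = 0 then n choose r else 0) + (if k = p then n choose (r - p) else 0)) =
             (n choose r) + (if p \<le> r then n choose (r - p) else 0)"
    by (simp add: sum.distrib)
  finally show ?thesis .
qed

lemma binom_pa_pb:
  fixes p a b :: nat
  assumes p: "prime p"
  shows "[(p * a) choose (p * b) = a choose b] (mod p)"
proof (induction a arbitrary: b)
  case 0
  have p0: "p \<noteq> 0" using p by auto
  show ?case
  proof (cases b)
    case 0 then show ?thesis by simp
  next
    case (Suc b')
    then have "0 < p * b" using p0 by simp
    then have e1: "0 choose (p * b) = 0" by (rule binomial_eq_0)
    have e2: "0 choose b = 0" using Suc by simp
    have "(p * 0) choose (p * b) = 0 choose b" by (simp only: mult_0_right e1 e2)
    then show ?thesis by simp
  qed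
next
  case (Suc a)
  have p0: "p \<noteq> 0" using p by auto
  have "(p * Suc a) choose (p * b) = (p * a + p) choose (p * b)" by (simp add: algebra_simps)
  also have "[\<dots> = ((p * a) choose (p * b)) + (if p \<le> p * b then (p * a) choose (p * b - p) else 0)] (mod p)"
    by (rule binom_shift[OF p])
  also have "[((p * a) choose (p * b)) + (if p \<le> p * b then (p * a) choose (p * b - p) else 0)
             = (a choose b) + (if 1 \<le> b then a choose (b - 1) else 0)] (mod p)"
  proof (rule cong_add)
    show "[(p * a) choose (p * b) = a choose b] (mod p)" by (rule Suc.IH)
    show "[(if p \<le> p * b then (p * a) choose (p * b - p) else 0) = (if 1 \<le> b then a choose (b - 1) else 0)] (mod p)"
    proof (cases "1 \<le> b")
      case True
      then have "p * b - p = p * (b - 1)" by (simp add: algebra_simps)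
      then show ?thesis using True Suc.IH[of "b - 1"] p0 by simp
    next
      case False
      then show ?thesis using p0 by simp
    qed
  qed
  also have "(a choose b) + (if 1 \<le> b then a choose (b - 1) else 0) = Suc a choose b"
    by (cases b) auto
  finally show ?case .
qed

lemma binom_pd:
  fixes p d a k :: nat
  assumes p: "prime p"
  shows "[(p ^ d * a) choose k = (if p ^ d dvd k then a choose (k div p ^ d) else 0)] (mod p)"
proof (induction d arbitrary: a k)
  case 0 then show ?case by simp
next
  case (Suc d)
  have p0: "p > 0" using p prime_gt_0_nat by blast
  have "(p ^ Suc d * a) choose k = (p ^ d * (p * a)) choose k" by (simp add: algebra_simps)
  also have "[\<dots> = (if p ^ d dvd k then (p * a) choose (k div p ^ d) else 0)] (mod p)" by (rule Suc.IH)
  also have "[(if p ^ d dvd k then (p * a) choose (k div p ^ d) else 0) =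
              (if p ^ Suc d dvd k then a choose (k div p ^ Suc d) else 0)] (mod p)"
  proof (cases "p ^ d dvd k")
    case False
    then have "\<not> p ^ Suc d dvd k" using dvd_mult_right[of p "p ^ d" k] by auto
    then show ?thesis using False by simp
  next
    case True
    then obtain k' where kk: "k = p ^ d * k'" by blast
    have kd: "k div p ^ d = k'" using kk p0 by simp
    show ?thesis
    proof (cases "p dvd k'")
      case True2: True
      then obtain k'' where k'': "k' = p * k''" by blast
      have "p ^ Suc d dvd k" using kk k'' by (simp add: power_Suc2 mult.assoc)
      moreover have "k div p ^ Suc d = k''" using kk k'' p0 by (simp add: power_Suc2 mult.assoc)
      ultimately show ?thesis using True kd k'' binom_pa_pb[OF p, of a k''] by simp
    next
      case False
      then have "\<not> p ^ Suc d dvd k" using kk p0 by (simp add: power_Suc2 mult.commute[of _ p])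
      moreover have "p dvd ((p * a) choose k')" using binom_pa_zero[OF p False] .
      ultimately show ?thesis using True kd by (simp add: cong_0_iff)
    qed
  qed
  finally show ?case .
qed

lemma M_zero:
  fixes p d :: nat
  assumes p: "prime p"
  shows "\<forall>a. S \<subseteq> {1..<p ^ d * a} \<longrightarrow> \<not> S \<subseteq> range ((*) (p ^ d)) \<longrightarrow> [Mle {1..p ^ d * a} S = 0] (mod p)"
proof (induction "card S" arbitrary: S rule: less_induct)
  case less
  show ?case
  proof (intro allI impI)
    fix a assume S: "S \<subseteq> {1..<p ^ d * a}" and nr: "\<not> S \<subseteq> range ((*) (p ^ d))"
    have ne: "S \<noteq> {}" using nr by auto
    have finS: "finite S" using S finite_subset by blast
    define s where "s = Max S"
    have sS: "s \<in> S" using finS ne by (simp add: s_def)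
    have rec: "Mle {1..p ^ d * a} S = (p ^ d * a choose s) * Mle {1..s} (S - {s})"
      unfolding s_def by (rule Mle_rec[OF S ne])
    show "[Mle {1..p ^ d * a} S = 0] (mod p)"
    proof (cases "p ^ d dvd s")
      case False
      then have "[p ^ d * a choose s = 0] (mod p)" using binom_pd[OF p, of d a s] by simp
      then have "[(p ^ d * a choose s) * Mle {1..s} (S - {s}) = 0 * Mle {1..s} (S - {s})] (mod p)"
        by (rule cong_scalar_right)
      then show ?thesis using rec by simp
    next
      case True
      then obtain c where c: "s = p ^ d * c" by blast
      have lt: "card (S - {s}) < card S" using finS sS by (meson card_Diff1_less)
      have sub: "S - {s} \<subseteq> {1..<p ^ d * c}"
      proof
        fix x assume x: "x \<in> S - {s}"
        then have "x \<le> s" using finS by (simp add: s_def)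
        then show "x \<in> {1..<p ^ d * c}" using x S c by auto
      qed
      have nr2: "\<not> S - {s} \<subseteq> range ((*) (p ^ d))"
      proof
        assume "S - {s} \<subseteq> range ((*) (p ^ d))"
        moreover have "s \<in> range ((*) (p ^ d))" using c by (intro rangeI[of _ c, THEN back_subst[where P="\<lambda>x. x \<in> range _"]]) auto
        ultimately have "S \<subseteq> range ((*) (p ^ d))" by blast
        then show False using nr by simp
      qed
      have "[Mle {1..p ^ d * c} (S - {s}) = 0] (mod p)"
        using less[OF lt, rule_format, of c] sub nr2 by blast
      then have "[Mle {1..s} (S - {s}) = 0] (mod p)" using c by simp
      then have "[(p ^ d * a choose s) * Mle {1..s} (S - {s}) = (p ^ d * a choose s) * 0] (mod p)"
        by (rule cong_scalar_left)
      then show ?thesis using rec by simp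
    qed
  qed
qed

lemma M_mult:
  fixes p d :: nat
  assumes p: "prime p"
  shows "\<forall>a. T \<subseteq> {1..<a} \<longrightarrow> [Mle {1..p ^ d * a} ((*) (p ^ d) ` T) = Mle {1..a} T] (mod p)"
proof (induction "card T" arbitrary: T rule: less_induct)
  case less
  show ?case
  proof (intro allI impI)
    fix a assume T: "T \<subseteq> {1..<a}"
    define q where "q = p ^ d"
    have q0: "q > 0" using p by (simp add: q_def prime_gt_0_nat)
    show "[Mle {1..p ^ d * a} ((*) (p ^ d) ` T) = Mle {1..a} T] (mod p)"
    proof (cases "T = {}")
      case True then show ?thesis by (simp add: Mle_empty)
    next
      case False
      have finT: "finite T" using T finite_subset by blast
      define t where "t = Max T"
      have tT: "t \<in> T" using finT False by (simp add: t_def)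
      have tmax: "\<And>x. x \<in> T \<Longrightarrow> x \<le> t" using finT by (simp add: t_def)
      have qT: "(*) q ` T \<subseteq> {1..<q * a}" using T q0 by auto
      have qne: "(*) q ` T \<noteq> {}" using False by simp
      have maxq: "Max ((*) q ` T) = q * t"
      proof (rule Max_eqI)
        show "finite ((*) q ` T)" using finT by simp
        show "\<And>y. y \<in> (*) q ` T \<Longrightarrow> y \<le> q * t" using tmax by auto
        show "q * t \<in> (*) q ` T" using tT by (rule imageI)
      qed
      have inj: "inj ((*) q)" using q0 by (auto simp: inj_on_def)
      have diff: "(*) q ` T - {q * t} = (*) q ` (T - {t})"
        using inj q0 by (auto simp: inj_eq)
      have rec1: "Mle {1..q * a} ((*) q ` T) = (q * a choose (q * t)) * Mle {1..q * t} ((*) q ` (T - {t}))"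
        using Mle_rec[OF qT qne] maxq diff by simp
      have rec2: "Mle {1..a} T = (a choose t) * Mle {1..t} (T - {t})"
        using Mle_rec[OF T False] by (simp add: t_def)
      have c1: "[q * a choose (q * t) = a choose t] (mod p)"
      proof -
        have "p > 0" using p prime_gt_0_nat by blast
        then show ?thesis using binom_pd[OF p, of d a "q * t"] by (simp add: q_def)
      qed
      have lt: "card (T - {t}) < card T" using finT tT by (meson card_Diff1_less)
      have sub: "T - {t} \<subseteq> {1..<t}"
      proof
        fix x assume x: "x \<in> T - {t}"
        then have "x \<le> t" using tmax by simp
        then show "x \<in> {1..<t}" using x T by auto
      qed
      have c2: "[Mle {1..q * t} ((*) q ` (T - {t})) = Mle {1..t} (T - {t})] (mod p)"
        using less[OF lt, rule_format, of t] sub by (simp add: q_def)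
      have "[Mle {1..q * a} ((*) q ` T) = Mle {1..a} T] (mod p)"
        using cong_mult[OF c1 c2] rec1 rec2 by simp
      then show ?thesis by (simp add: q_def)
    qed
  qed
qed

lemma rib_mobius:
  assumes "D \<subseteq> {1..<n}"
  shows "int (rib n D) = (\<Sum>S\<in>Pow D. (-1)^card (D - S) * int (Mle {1..n} S))"
proof -
  have "finite D" using assms finite_subset by blast
  then show ?thesis unfolding rib_def Mle_def
    using mobius[of "LA {1..n}" D desc] finite_LA[of "{1..n}"] by simp
qed

lemma rib_cong:
  fixes p d m :: nat
  assumes p: "prime p" and D: "D \<subseteq> {1..<p ^ d * m}"
  shows "[int (rib (p ^ d * m) D) = (-1) ^ card (D - range ((*) (p ^ d))) * int (rib m {j. p ^ d * j \<in> D})] (mod int p)"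
proof -
  define q where "q = p ^ d"
  define n where "n = q * m"
  define R where "R = range ((*) q)"
  define T where "T = {j. q * j \<in> D}"
  have q0: "q > 0" using p by (simp add: q_def prime_gt_0_nat)
  have inj: "inj ((*) q)" using q0 by (auto simp: inj_on_def)
  have Dn: "D \<subseteq> {1..<n}" using D by (simp add: n_def q_def)
  have finD: "finite D" using Dn finite_subset by blast
  have Tm: "T \<subseteq> {1..<m}"
  proof
    fix j assume "j \<in> T"
    then have "q * j \<in> {1..<q * m}" using Dn by (auto simp: T_def n_def)
    then show "j \<in> {1..<m}" using q0 by (auto simp: mult_less_cancel1)
  qed
  have finT: "finite T" using Tm finite_subset by blast
  have DR: "D \<inter> R = (*) q ` T" by (auto simp: R_def T_def)
  define f where "f = (\<lambda>S. (-1::int) ^ card (D - S) * int (Mle {1..n} S))"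
  have "int (rib n D) = (\<Sum>S\<in>Pow D. f S)" unfolding f_def by (rule rib_mobius[OF Dn])
  also have "[\<dots> = (\<Sum>S\<in>Pow D. if S \<subseteq> R then f S else 0)] (mod int p)"
  proof (rule cong_sum)
    fix S assume S: "S \<in> Pow D"
    show "[f S = (if S \<subseteq> R then f S else 0)] (mod int p)"
    proof (cases "S \<subseteq> R")
      case False
      have "S \<subseteq> {1..<p ^ d * m}" using S D by auto
      then have "[Mle {1..p ^ d * m} S = 0] (mod p)"
        using M_zero[OF p, of S d, rule_format, of m] False by (simp add: R_def q_def)
      then have "[int (Mle {1..n} S) = int 0] (mod int p)" unfolding cong_int_iff by (simp add: n_def q_def)
      then have "[(-1::int) ^ card (D - S) * int (Mle {1..n} S) = (-1) ^ card (D - S) * int 0] (mod int p)"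
        by (rule cong_scalar_left)
      then show ?thesis using False by (simp add: f_def)
    qed simp
  qed
  also have "(\<Sum>S\<in>Pow D. if S \<subseteq> R then f S else 0) = (\<Sum>S\<in>{S\<in>Pow D. S \<subseteq> R}. f S)"
    using finD by (intro sum.inter_filter[symmetric]) simp
  also have "{S\<in>Pow D. S \<subseteq> R} = image ((*) q) ` Pow T"
  proof -
    have "{S\<in>Pow D. S \<subseteq> R} = Pow (D \<inter> R)" by auto
    also have "\<dots> = image ((*) q) ` Pow T" unfolding DR
    proof (intro equalityI subsetI)
      fix B assume "B \<in> Pow ((*) q ` T)"
      then obtain U where "U \<subseteq> T" "B = (*) q ` U" using subset_image_iff[of B "(*) q" T] by auto
      then show "B \<in> image ((*) q) ` Pow T" by blast
    next
      fix B assume "B \<in> image ((*) q) ` Pow T"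
      then show "B \<in> Pow ((*) q ` T)" by auto
    qed
    finally show ?thesis .
  qed
  also have "(\<Sum>S\<in>image ((*) q) ` Pow T. f S) = (\<Sum>U\<in>Pow T. f ((*) q ` U))"
  proof (rule sum.reindex[unfolded comp_def])
    show "inj_on (image ((*) q)) (Pow T)" using inj by (auto simp: inj_on_def inj_image_eq_iff)
  qed
  also have "[(\<Sum>U\<in>Pow T. f ((*) q ` U)) = (\<Sum>U\<in>Pow T. (-1::int) ^ card (D - (*) q ` U) * int (Mle {1..m} U))] (mod int p)"
  proof (rule cong_sum)
    fix U assume U: "U \<in> Pow T"
    then have "U \<subseteq> {1..<m}" using Tm by auto
    then have "[Mle {1..p ^ d * m} ((*) (p ^ d) ` U) = Mle {1..m} U] (mod p)"
      using M_mult[OF p, of U d, rule_format, of m] by simp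
    then have "[int (Mle {1..n} ((*) q ` U)) = int (Mle {1..m} U)] (mod int p)"
      unfolding cong_int_iff by (simp add: n_def q_def)
    then show "[f ((*) q ` U) = (-1::int) ^ card (D - (*) q ` U) * int (Mle {1..m} U)] (mod int p)"
      unfolding f_def by (rule cong_scalar_left)
  qed
  also have "(\<Sum>U\<in>Pow T. (-1::int) ^ card (D - (*) q ` U) * int (Mle {1..m} U)) =
             (\<Sum>U\<in>Pow T. (-1::int) ^ card (D - R) * ((-1) ^ card (T - U) * int (Mle {1..m} U)))"
  proof (rule sum.cong[OF refl])
    fix U assume U: "U \<in> Pow T"
    have eq: "D - (*) q ` U = (D - R) \<union> (*) q ` (T - U)"
      using U q0 by (auto simp: R_def T_def inj_eq[OF inj])
    have disj: "(D - R) \<inter> (*) q ` (T - U) = {}" by (auto simp: R_def)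
    have "card (D - (*) q ` U) = card (D - R) + card ((*) q ` (T - U))"
      unfolding eq using finD finT disj by (simp add: card_Un_disjoint)
    also have "card ((*) q ` (T - U)) = card (T - U)"
      using inj by (simp add: card_image inj_on_subset)
    finally show "(-1::int) ^ card (D - (*) q ` U) * int (Mle {1..m} U) =
      (-1::int) ^ card (D - R) * ((-1) ^ card (T - U) * int (Mle {1..m} U))"
      by (simp add: power_add)
  qed
  also have "\<dots> = (-1::int) ^ card (D - R) * (\<Sum>U\<in>Pow T. (-1) ^ card (T - U) * int (Mle {1..m} U))"
    by (simp add: sum_distrib_left)
  also have "\<dots> = (-1::int) ^ card (D - R) * int (rib m T)"
    using rib_mobius[OF Tm] by simp
  finally show ?thesis by (simp add: n_def q_def R_def T_def)
qed

lemma sign_cond: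
  fixes r i p :: int
  shows "[(-1::int) ^ k * r = i] (mod p) \<longleftrightarrow> (even k \<and> [r = i] (mod p)) \<or> (odd k \<and> [r = - i] (mod p))"
proof (cases "even k")
  case True then show ?thesis by simp
next
  case False
  then have "[(-1::int) ^ k * r = i] (mod p) \<longleftrightarrow> [- r = - (- i)] (mod p)" by simp
  also have "\<dots> \<longleftrightarrow> [r = - i] (mod p)" by (rule cong_minus_minus_iff)
  finally show ?thesis using False by simp
qed

definition tog :: "nat \<Rightarrow> nat set \<Rightarrow> nat set" where
  "tog x X = (if x \<in> X then X - {x} else insert x X)"

lemma parity_count:
  fixes Q :: "nat set"
  assumes fin: "finite Q" and ne: "Q \<noteq> {}"
  shows "card {X \<in> Pow Q. even (card X)} = 2 ^ (card Q - 1)"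
    and "card {X \<in> Pow Q. odd (card X)} = 2 ^ (card Q - 1)"
proof -
  obtain x where x: "x \<in> Q" using ne by blast
  define E where "E = {X \<in> Pow Q. even (card X)}"
  define Od where "Od = {X \<in> Pow Q. odd (card X)}"
  have togtog: "tog x (tog x X) = X" for X by (auto simp: tog_def)
  have par: "odd (card (tog x X)) \<longleftrightarrow> even (card X)" if "X \<subseteq> Q" for X
  proof -
    have fX: "finite X" using that fin finite_subset by blast
    show ?thesis
    proof (cases "x \<in> X")
      case True
      then have "card X = Suc (card (X - {x}))" using card_Suc_Diff1[OF fX True] by simp
      then show ?thesis using True by (simp add: tog_def)
    next
      case False
      then show ?thesis using fX by (simp add: tog_def)
    qed
  qed
  have sub: "tog x X \<subseteq> Q" if "X \<subseteq> Q" for X using that x by (auto simp: tog_def)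
  have "bij_betw (tog x) E Od"
  proof (rule bij_betw_byWitness[where f'="tog x"])
    show "\<forall>a\<in>E. tog x (tog x a) = a" using togtog by simp
    show "\<forall>a\<in>Od. tog x (tog x a) = a" using togtog by simp
    show "tog x ` E \<subseteq> Od" using par sub by (auto simp: E_def Od_def)
    show "tog x ` Od \<subseteq> E"
    proof
      fix Y assume "Y \<in> tog x ` Od"
      then obtain X where X: "X \<in> Od" "Y = tog x X" by blast
      then have "X \<subseteq> Q" "odd (card X)" by (auto simp: Od_def)
      moreover have "odd (card (tog x Y)) \<longleftrightarrow> even (card Y)" using par sub X \<open>X \<subseteq> Q\<close> by blast
      ultimately show "Y \<in> E" using X togtog sub by (auto simp: E_def)
    qed
  qed
  then have eo: "card E = card Od" by (rule bij_betw_same_card)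
  have PQ: "Pow Q = E \<union> Od" by (auto simp: E_def Od_def)
  have disj: "E \<inter> Od = {}" by (auto simp: E_def Od_def)
  have fE: "finite E" using fin by (simp add: E_def)
  have fO: "finite Od" using fin by (simp add: Od_def)
  have "card (Pow Q) = card E + card Od" unfolding PQ by (rule card_Un_disjoint[OF fE fO disj])
  then have s: "card E + card Od = 2 ^ card Q" using fin by (simp add: card_Pow)
  obtain k where k: "card Q = Suc k" using fin ne by (cases "card Q") auto
  have "2 * card E = 2 * 2 ^ (card Q - 1)" using s eo k by simp
  then show "card {X \<in> Pow Q. even (card X)} = 2 ^ (card Q - 1)"
    and "card {X \<in> Pow Q. odd (card X)} = 2 ^ (card Q - 1)" using eo by (simp_all add: E_def Od_def)
qed

lemma count_main:
  fixes p d m :: nat and P :: "nat set \<Rightarrow> bool"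
  assumes p: "prime p" and m: "1 \<le> m"
  shows "card {D \<in> Pow {1..<p ^ d * m}. P D} =
    (\<Sum>T\<in>Pow {1..<m}. card {X \<in> Pow ({1..<p ^ d * m} - range ((*) (p ^ d))). P ((*) (p ^ d) ` T \<union> X)})"
proof -
  define q where "q = p ^ d"
  define n where "n = q * m"
  define R where "R = range ((*) q)"
  define Q where "Q = {1..<n} - R"
  have q0: "q > 0" using p by (simp add: q_def prime_gt_0_nat)
  have inj: "inj ((*) q)" using q0 by (auto simp: inj_on_def)
  define \<phi> where "\<phi> = (\<lambda>(T, X). (*) q ` T \<union> X)"
  define Dom where "Dom = (SIGMA T:Pow {1..<m}. {X \<in> Pow Q. P ((*) q ` T \<union> X)})"
  have XR: "X \<inter> R = {}" if "X \<subseteq> Q" for X using that by (auto simp: Q_def)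
  have qTR: "(*) q ` T \<subseteq> R" for T by (auto simp: R_def)
  have injphi: "inj_on \<phi> Dom"
  proof (rule inj_onI)
    fix a b assume a: "a \<in> Dom" and b: "b \<in> Dom" and e: "\<phi> a = \<phi> b"
    obtain T X where aa: "a = (T, X)" by fastforce
    obtain T' X' where bb: "b = (T', X')" by fastforce
    have X: "X \<subseteq> Q" "X' \<subseteq> Q" using a b aa bb by (auto simp: Dom_def)
    have e2: "(*) q ` T \<union> X = (*) q ` T' \<union> X'" using e aa bb by (simp add: \<phi>_def)
    have "(*) q ` T = ((*) q ` T \<union> X) \<inter> R" using XR[OF X(1)] qTR[of T] by blast
    also have "\<dots> = ((*) q ` T' \<union> X') \<inter> R" using e2 by simp
    also have "\<dots> = (*) q ` T'" using XR[OF X(2)] qTR[of T'] by blast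
    finally have "T = T'" using inj by (simp add: inj_image_eq_iff)
    moreover have "X = X'"
    proof -
      have "X = ((*) q ` T \<union> X) - R" using XR[OF X(1)] qTR[of T] by blast
      also have "\<dots> = ((*) q ` T' \<union> X') - R" using e2 by simp
      also have "\<dots> = X'" using XR[OF X(2)] qTR[of T'] by blast
      finally show ?thesis .
    qed
    ultimately show "a = b" using aa bb by simp
  qed
  have img: "\<phi> ` Dom = {D \<in> Pow {1..<n}. P D}"
  proof (intro equalityI subsetI)
    fix D assume "D \<in> \<phi> ` Dom"
    then obtain T X where T: "T \<subseteq> {1..<m}" and X: "X \<subseteq> Q" "P ((*) q ` T \<union> X)" and D: "D = (*) q ` T \<union> X"
      by (auto simp: Dom_def \<phi>_def)
    have "(*) q ` T \<subseteq> {1..<n}" using T q0 by (auto simp: n_def)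
    then show "D \<in> {D \<in> Pow {1..<n}. P D}" using D X by (auto simp: Q_def)
  next
    fix D assume D: "D \<in> {D \<in> Pow {1..<n}. P D}"
    define T where "T = {j. q * j \<in> D}"
    have T: "T \<subseteq> {1..<m}"
    proof
      fix j assume "j \<in> T"
      then have "q * j \<in> {1..<q * m}" using D by (auto simp: T_def n_def)
      then show "j \<in> {1..<m}" using q0 by (auto simp: mult_less_cancel1)
    qed
    have De: "D = (*) q ` T \<union> (D - R)" by (auto simp: T_def R_def)
    have PD: "P ((*) q ` T \<union> (D - R))" using D De[symmetric] by simp
    have "D - R \<subseteq> Q" using D by (auto simp: Q_def)
    then have "(T, D - R) \<in> Dom" using T PD by (simp add: Dom_def)
    moreover have "\<phi> (T, D - R) = D" using De[symmetric] by (simp add: \<phi>_def)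
    ultimately show "D \<in> \<phi> ` Dom" by (metis imageI)
  qed
  have f1: "finite (Pow {1..<m})" by simp
  have f2: "\<forall>T\<in>Pow {1..<m}. finite {X \<in> Pow Q. P ((*) q ` T \<union> X)}" by (simp add: Q_def)
  have "card {D \<in> Pow {1..<n}. P D} = card Dom" using card_image[OF injphi] img by simp
  also have "\<dots> = (\<Sum>T\<in>Pow {1..<m}. card {X \<in> Pow Q. P ((*) q ` T \<union> X)})"
    unfolding Dom_def by (rule card_SigmaI[OF f1 f2])
  finally show ?thesis by (simp add: n_def q_def Q_def R_def)
qed

lemma card_comp_rib:
  assumes "n \<ge> 1"
  shows "card {\<alpha> \<in> compositions n. Pr (int (ribbon \<alpha>))} = card {D \<in> Pow {1..<n}. Pr (int (rib n D))}"
proof -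
  have "{\<alpha> \<in> compositions n. Pr (int (ribbon \<alpha>))} = {\<alpha> \<in> compositions n. Pr (int (rib n (comp_descents \<alpha>)))}"
    by (auto simp: ribbon_rib compositions_def)
  then show ?thesis using count_comp[OF assms, of "\<lambda>D. Pr (int (rib n D))"] by simp
qed

lemma inner:
  fixes p d m :: nat and i :: int
  assumes p: "prime p" and T: "T \<subseteq> {1..<m}" and X: "X \<subseteq> {1..<p ^ d * m} - range ((*) (p ^ d))"
  shows "[int (rib (p ^ d * m) ((*) (p ^ d) ` T \<union> X)) = i] (mod int p) \<longleftrightarrow>
         [(-1) ^ card X * int (rib m T) = i] (mod int p)"
proof -
  define q where "q = p ^ d"
  have q0: "q > 0" using p by (simp add: q_def prime_gt_0_nat)
  define D where "D = (*) q ` T \<union> X"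
  have D: "D \<subseteq> {1..<p ^ d * m}" using T X q0 by (auto simp: D_def q_def)
  have DR: "D - range ((*) (p ^ d)) = X" using X by (auto simp: D_def q_def)
  have DT: "{j. p ^ d * j \<in> D} = T"
  proof -
    have "{j. q * j \<in> D} = T" using X q0 by (auto simp: D_def q_def inj_eq)
    then show ?thesis by (simp add: q_def)
  qed
  have c: "[int (rib (p ^ d * m) D) = (-1) ^ card X * int (rib m T)] (mod int p)"
    using rib_cong[OF p D] DR DT by simp
  show ?thesis
  proof
    assume "[int (rib (p ^ d * m) ((*) (p ^ d) ` T \<union> X)) = i] (mod int p)"
    then show "[(-1) ^ card X * int (rib m T) = i] (mod int p)"
      using c by (simp add: D_def q_def) (meson cong_sym cong_trans)
  next
    assume "[(-1) ^ card X * int (rib m T) = i] (mod int p)"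
    then show "[int (rib (p ^ d * m) ((*) (p ^ d) ` T \<union> X)) = i] (mod int p)"
      using c by (simp add: D_def q_def) (meson cong_trans)
  qed
qed

lemma sum_if_const: "finite A \<Longrightarrow> (\<Sum>x\<in>A. if P x then (c::nat) else 0) = c * card {x\<in>A. P x}"
  by (simp add: sum.inter_filter[symmetric])

theorem corollary3p3:
  fixes p m d :: nat and i :: int
  assumes "prime p" and "1 \<le> m" and "m \<le> p - 1"
  defines "n \<equiv> m * p ^ d"
  shows "c_count p i n =
    (if [i = 0] (mod int p) \<or> p = 2 \<or> d = 0
     then 2 ^ (n - m) * card {\<gamma> \<in> compositions m. [int (ribbon \<gamma>) = i] (mod int p)}
     else 2 ^ (n - m - 1) * card {\<gamma> \<in> compositions m.
              [int (ribbon \<gamma>) = i] (mod int p) \<or> [int (ribbon \<gamma>) = - i] (mod int p)})"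
proof (cases "d = 0")
  case True
  then show ?thesis by (simp add: n_def c_count_def)
next
  case False
  note p = assms(1) and m1 = assms(2)
  define q where "q = p ^ d"
  have p2: "p \<ge> 2" using p by (simp add: prime_ge_2_nat)
  have q2: "q \<ge> 2"
  proof -
    have "p ^ 1 \<le> p ^ d" using False p2 by (intro power_increasing) auto
    then show ?thesis using p2 by (simp add: q_def)
  qed
  have nq: "n = q * m" by (simp add: n_def q_def mult.commute)
  have n1: "n \<ge> 1" using m1 q2 nq by (simp add: Suc_le_eq)
  have nm: "m \<le> n" using q2 nq by simp
  define R where "R = range ((*) q)"
  define Q where "Q = {1..<n} - R"
  have finQ: "finite Q" by (simp add: Q_def)
  have cardQ: "card Q = n - m"
  proof -
    have "{1..<n} \<inter> R = (*) q ` {1..<m}"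
    proof (intro equalityI subsetI)
      fix x assume "x \<in> {1..<n} \<inter> R"
      then obtain j where j: "x = q * j" "1 \<le> q * j" "q * j < q * m" by (auto simp: R_def nq)
      then have "j \<in> {1..<m}" using q2 by (auto simp: mult_less_cancel1 intro: ccontr)
      then show "x \<in> (*) q ` {1..<m}" using j by blast
    next
      fix x assume "x \<in> (*) q ` {1..<m}"
      then obtain j where "j \<in> {1..<m}" "x = q * j" by blast
      then have j: "x = q * j" "1 \<le> j" "j < m" by auto
      then have "q * j < q * m" "1 \<le> q * j" using q2 by auto
      then show "x \<in> {1..<n} \<inter> R" using j by (auto simp: R_def nq)
    qed
    moreover have "card ((*) q ` {1..<m}) = m - 1"
    proof -
      have "inj_on ((*) q) {1..<m}" using q2 by (auto simp: inj_on_def)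
      then show ?thesis by (simp add: card_image)
    qed
    ultimately have "card ({1..<n} \<inter> R) = m - 1" by simp
    then have "card Q = (n - 1) - (m - 1)" unfolding Q_def by (simp add: card_Diff_subset_Int)
    then show ?thesis using m1 nm by simp
  qed
  define r where "r = (\<lambda>T. int (rib m T))"
  have cc: "c_count p i n = (\<Sum>T\<in>Pow {1..<m}. card {X \<in> Pow Q. [(-1) ^ card X * r T = i] (mod int p)})"
  proof -
    have "c_count p i n = card {D \<in> Pow {1..<n}. [int (rib n D) = i] (mod int p)}"
      unfolding c_count_def using card_comp_rib[OF n1, of "\<lambda>x. [x = i] (mod int p)"] by simp
    also have "\<dots> = (\<Sum>T\<in>Pow {1..<m}. card {X \<in> Pow Q. [int (rib n ((*) q ` T \<union> X)) = i] (mod int p)})"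
      using count_main[OF p m1, of d "\<lambda>D. [int (rib n D) = i] (mod int p)"]
      by (simp add: nq q_def Q_def R_def)
    also have "\<dots> = (\<Sum>T\<in>Pow {1..<m}. card {X \<in> Pow Q. [(-1) ^ card X * r T = i] (mod int p)})"
    proof (rule sum.cong[OF refl])
      fix T assume T: "T \<in> Pow {1..<m}"
      have "{X \<in> Pow Q. [int (rib n ((*) q ` T \<union> X)) = i] (mod int p)} = {X \<in> Pow Q. [(-1) ^ card X * r T = i] (mod int p)}"
      proof (rule Collect_cong)
        fix X
        show "(X \<in> Pow Q \<and> [int (rib n ((*) q ` T \<union> X)) = i] (mod int p)) =
              (X \<in> Pow Q \<and> [(-1) ^ card X * r T = i] (mod int p))"
        proof (cases "X \<subseteq> Q")
          case True
          have XX: "X \<subseteq> {1..<p ^ d * m} - range ((*) (p ^ d))" using True by (simp add: Q_def R_def nq q_def)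
          have TT: "T \<subseteq> {1..<m}" using T by simp
          show ?thesis using inner[OF p TT XX, of i] True by (simp add: nq q_def r_def)
        qed simp
      qed
      then show "card {X \<in> Pow Q. [int (rib n ((*) q ` T \<union> X)) = i] (mod int p)} =
                 card {X \<in> Pow Q. [(-1) ^ card X * r T = i] (mod int p)}" by simp
    qed
    finally show ?thesis .
  qed
  have cm: "card {\<gamma> \<in> compositions m. Pr (int (ribbon \<gamma>))} = card {T \<in> Pow {1..<m}. Pr (r T)}" for Pr
    using card_comp_rib[OF m1, of Pr] by (simp add: r_def)
  show ?thesis
  proof (cases "[i = 0] (mod int p) \<or> p = 2")
    case True
    have ii: "[- i = i] (mod int p)"
    proof -
      have "int p dvd (- i - i)"
      proof (cases "p = 2")
        case True then show ?thesis by simp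
      next
        case False
        then have "int p dvd i" using \<open>[i = 0] (mod int p) \<or> p = 2\<close> by (simp add: cong_0_iff)
        then show ?thesis by simp
      qed
      then show ?thesis by (simp add: cong_iff_dvd_diff)
    qed
    have each: "card {X \<in> Pow Q. [(-1) ^ card X * r T = i] (mod int p)} =
                (if [r T = i] (mod int p) then 2 ^ (n - m) else 0)" for T
    proof -
      have eqv: "[(-1) ^ card X * r T = i] (mod int p) \<longleftrightarrow> [r T = i] (mod int p)" for X
      proof -
        have "[r T = - i] (mod int p) \<longleftrightarrow> [r T = i] (mod int p)"
          using ii by (meson cong_sym cong_trans)
        then show ?thesis using sign_cond[of "card X" "r T" i "int p"] by auto
      qed
      show ?thesis
      proof (cases "[r T = i] (mod int p)")
        case True
        then have "{X \<in> Pow Q. [(-1) ^ card X * r T = i] (mod int p)} = Pow Q" using eqv by auto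
        then show ?thesis using True finQ cardQ by (simp add: card_Pow)
      next
        case False
        then have e: "{X \<in> Pow Q. [(-1) ^ card X * r T = i] (mod int p)} = {}" using eqv by auto
        show ?thesis unfolding e using False by simp
      qed
    qed
    have "c_count p i n = (\<Sum>T\<in>Pow {1..<m}. if [r T = i] (mod int p) then 2 ^ (n - m) else 0)"
      using cc each by simp
    also have "\<dots> = 2 ^ (n - m) * card {T \<in> Pow {1..<m}. [r T = i] (mod int p)}"
      by (rule sum_if_const) simp
    also have "\<dots> = 2 ^ (n - m) * card {\<gamma> \<in> compositions m. [int (ribbon \<gamma>) = i] (mod int p)}"
      using cm[of "\<lambda>x. [x = i] (mod int p)"] by simp
    finally have "c_count p i n = 2 ^ (n - m) * card {\<gamma> \<in> compositions m. [int (ribbon \<gamma>) = i] (mod int p)}" .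
    moreover have "[i = 0] (mod int p) \<or> p = 2 \<or> d = 0" using True by blast
    ultimately show ?thesis by (simp only: if_True)
  next
    case False
    then have i0: "\<not> [i = 0] (mod int p)" and pn2: "p \<noteq> 2" by auto
    have podd: "odd p" using p pn2 by (metis prime_prime_factor two_is_prime_nat prime_odd_nat)
    have excl: "\<not> ([x = i] (mod int p) \<and> [x = - i] (mod int p))" for x
    proof
      assume a: "[x = i] (mod int p) \<and> [x = - i] (mod int p)"
      then have "[i = - i] (mod int p)" by (meson cong_sym cong_trans)
      then have "int p dvd (i - - i)" by (simp add: cong_iff_dvd_diff)
      then have "int p dvd 2 * i" by simp
      moreover have "prime (int p)" using p by simp
      moreover have "\<not> int p dvd 2"
      proof
        assume "int p dvd 2"
        then have "p dvd 2" by presburger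
        then have "p \<le> 2" by (simp add: dvd_imp_le)
        then show False using p2 pn2 by simp
      qed
      ultimately have "int p dvd i" by (simp add: prime_dvd_mult_iff)
      then show False using i0 by (simp add: cong_0_iff)
    qed
    have Qne: "Q \<noteq> {}"
    proof -
      have "1 \<in> Q"
      proof -
        have "1 < n" using nq q2 m1 by (metis less_le_trans mult_le_mono one_less_numeral_iff semiring_norm(76) mult.right_neutral)
        moreover have "1 \<notin> R" using q2 by (auto simp: R_def)
        ultimately show ?thesis by (simp add: Q_def)
      qed
      then show ?thesis by blast
    qed
    have each: "card {X \<in> Pow Q. [(-1) ^ card X * r T = i] (mod int p)} =
                (if [r T = i] (mod int p) \<or> [r T = - i] (mod int p) then 2 ^ (n - m - 1) else 0)" for T
    proof -
      have eqv: "[(-1) ^ card X * r T = i] (mod int p) \<longleftrightarrow>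
          (even (card X) \<and> [r T = i] (mod int p)) \<or> (odd (card X) \<and> [r T = - i] (mod int p))" for X
        by (rule sign_cond)
      consider (A) "[r T = i] (mod int p)" | (B) "[r T = - i] (mod int p)" | (C) "\<not> [r T = i] (mod int p)" "\<not> [r T = - i] (mod int p)"
        by blast
      then show ?thesis
      proof cases
        case A
        then have nB: "\<not> [r T = - i] (mod int p)" using excl by blast
        have "{X \<in> Pow Q. [(-1) ^ card X * r T = i] (mod int p)} = {X \<in> Pow Q. even (card X)}"
          using eqv A nB by auto
        then show ?thesis using parity_count(1)[OF finQ Qne] cardQ A by simp
      next
        case B
        then have nA: "\<not> [r T = i] (mod int p)" using excl by blast
        have "{X \<in> Pow Q. [(-1) ^ card X * r T = i] (mod int p)} = {X \<in> Pow Q. odd (card X)}"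
          using eqv B nA by auto
        then show ?thesis using parity_count(2)[OF finQ Qne] cardQ B by simp
      next
        case C
        then have e: "{X \<in> Pow Q. [(-1) ^ card X * r T = i] (mod int p)} = {}" using eqv by auto
        show ?thesis unfolding e using C by simp
      qed
    qed
    have "c_count p i n = (\<Sum>T\<in>Pow {1..<m}. if [r T = i] (mod int p) \<or> [r T = - i] (mod int p) then 2 ^ (n - m - 1) else 0)"
      using cc each by simp
    also have "\<dots> = 2 ^ (n - m - 1) * card {T \<in> Pow {1..<m}. [r T = i] (mod int p) \<or> [r T = - i] (mod int p)}"
      by (rule sum_if_const) simp
    also have "\<dots> = 2 ^ (n - m - 1) * card {\<gamma> \<in> compositions m. [int (ribbon \<gamma>) = i] (mod int p) \<or> [int (ribbon \<gamma>) = - i] (mod int p)}"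
      using cm[of "\<lambda>x. [x = i] (mod int p) \<or> [x = - i] (mod int p)"] by simp
    finally show ?thesis using False \<open>d \<noteq> 0\<close> by simp
  qed
qed


end
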